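(* Let $\mathcal{M}$ be a $W^*$-algebra, $E\subset\mathcal{L}(\mathcal{M})$ a semilattice of projections, and define $\mathcal{S}:=\bigcup_{p\in E}Z(p\mathcal{M}p)\cap\mathcal{U}(\mathcal{M})$, where $Z(p\mathcal{M}p)$ is the center of $p\mathcal{M}p$. If $\mathcal{S}\subset\mathcal{U}(E)$, then $\mathcal{S}$ is an inverse semigroup (under multiplication in $\mathcal{M}$), and moreover $\mathcal{S}$ is a Clifford inverse semigroup.
   Context: $\mathcal{L}(\mathcal{M})$ is the set of orthogonal projections of $\mathcal{M}$, $\mathcal{U}(\mathcal{M})$ the set of partial isometries. A semilattice of projections is a subset $E\subset\mathcal{L}(\mathcal{M})$ of pairwise commuting projections closed under multiplication. $\mathcal{U}(E):=\{u\in\mathcal{U}(\mathcal{M}): u^*u\in E,\ uu^*\in E\}$. An inverse semigroup is a semigroup in which each $s$ has a unique $t$ with $sts=s$, $tst=t$; it is Clifford if its idempotents are central (commute with all its elements). *)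

theory Defs
  imports "HOL-Analysis.Analysis"
begin

text \<open>A complex C*-algebra structure on a real Banach algebra 'a is given by a complex
scalar multiplication scC (extending the real one) and an involution st.\<close>

definition cstar_algebra :: "(complex \<Rightarrow> 'a::{real_normed_algebra,banach} \<Rightarrow> 'a) \<Rightarrow> ('a \<Rightarrow> 'a) \<Rightarrow> bool"
  where "cstar_algebra scC st \<longleftrightarrow>
    (\<forall>r x. scC (complex_of_real r) x = r *\<^sub>R x) \<and>
    (\<forall>c x y. scC c (x + y) = scC c x + scC c y) \<and>
    (\<forall>c d x. scC (c + d) x = scC c x + scC d x) \<and>
    (\<forall>c d x. scC (c * d) x = scC c (scC d x)) \<and>
    (\<forall>c x y. scC c (x * y) = scC c x * y \<and> scC c (x * y) = x * scC c y) \<and>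
    (\<forall>c x. norm (scC c x) = cmod c * norm x) \<and>
    (\<forall>x. st (st x) = x) \<and>
    (\<forall>x y. st (x + y) = st x + st y) \<and>
    (\<forall>c x. st (scC c x) = scC (cnj c) (st x)) \<and>
    (\<forall>x y. st (x * y) = st y * st x) \<and>
    (\<forall>x. norm (st x * x) = (norm x)\<^sup>2)"

definition bounded_clinear_fun :: "(complex \<Rightarrow> 'a::real_normed_vector \<Rightarrow> 'a) \<Rightarrow> ('a \<Rightarrow> complex) \<Rightarrow> bool"
  where "bounded_clinear_fun scC f \<longleftrightarrow>
    (\<forall>x y. f (x + y) = f x + f y) \<and> (\<forall>c x. f (scC c x) = c * f x) \<and>
    (\<exists>K. \<forall>x. cmod (f x) \<le> K * norm x)"

text \<open>W*-algebra (Sakai): a C*-algebra that is a dual Banach space, i.e. there is a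
norm-closed complex subspace V of the dual such that the canonical map
x \<mapsto> (f \<mapsto> f x) is an isometric isomorphism from the algebra onto V*.\<close>

definition wstar_algebra :: "(complex \<Rightarrow> 'a::{real_normed_algebra,banach} \<Rightarrow> 'a) \<Rightarrow> ('a \<Rightarrow> 'a) \<Rightarrow> bool"
  where "wstar_algebra scC st \<longleftrightarrow> cstar_algebra scC st \<and>
    (\<exists>V :: ('a \<Rightarrow> complex) set.
       (\<forall>f\<in>V. bounded_clinear_fun scC f) \<and>
       (\<lambda>_. 0) \<in> V \<and>
       (\<forall>f\<in>V. \<forall>g\<in>V. (\<lambda>x. f x + g x) \<in> V) \<and>
       (\<forall>f\<in>V. \<forall>c. (\<lambda>x. c * f x) \<in> V) \<and>
       (\<forall>g. bounded_clinear_fun scC g \<longrightarrow>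
            (\<forall>e>0. \<exists>f\<in>V. onorm (\<lambda>x. g x - f x) < e) \<longrightarrow> g \<in> V) \<and>
       (\<forall>x. norm x = (SUP f\<in>{f\<in>V. onorm f \<le> 1}. cmod (f x))) \<and>
       (\<forall>\<phi> :: ('a \<Rightarrow> complex) \<Rightarrow> complex.
          (\<forall>f\<in>V. \<forall>g\<in>V. \<phi> (\<lambda>x. f x + g x) = \<phi> f + \<phi> g) \<longrightarrow>
          (\<forall>f\<in>V. \<forall>c. \<phi> (\<lambda>x. c * f x) = c * \<phi> f) \<longrightarrow>
          (\<exists>K. \<forall>f\<in>V. cmod (\<phi> f) \<le> K * onorm f) \<longrightarrow>
          (\<exists>x. \<forall>f\<in>V. \<phi> f = f x)))"

definition is_projection :: "('a \<Rightarrow> 'a) \<Rightarrow> 'a::semigroup_mult \<Rightarrow> bool"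
  where "is_projection st p \<longleftrightarrow> st p = p \<and> p * p = p"

definition partial_isometry :: "('a \<Rightarrow> 'a) \<Rightarrow> 'a::semigroup_mult \<Rightarrow> bool"
  where "partial_isometry st u \<longleftrightarrow> is_projection st (st u * u)"

definition projection_semilattice :: "('a \<Rightarrow> 'a) \<Rightarrow> 'a::semigroup_mult set \<Rightarrow> bool"
  where "projection_semilattice st E \<longleftrightarrow>
    (\<forall>p\<in>E. is_projection st p) \<and> (\<forall>p\<in>E. \<forall>q\<in>E. p * q = q * p \<and> p * q \<in> E)"

definition corner :: "'a::semigroup_mult \<Rightarrow> 'a set"
  where "corner p = {p * x * p | x. True}"

definition center_of :: "'a::semigroup_mult set \<Rightarrow> 'a set"
  where "center_of A = {z\<in>A. \<forall>y\<in>A. z * y = y * z}"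

definition U_of :: "('a \<Rightarrow> 'a) \<Rightarrow> 'a::semigroup_mult set \<Rightarrow> 'a set"
  where "U_of st E = {u. partial_isometry st u \<and> st u * u \<in> E \<and> u * st u \<in> E}"

definition inverse_semigroup :: "'a::semigroup_mult set \<Rightarrow> bool"
  where "inverse_semigroup S \<longleftrightarrow> (\<forall>s\<in>S. \<forall>t\<in>S. s * t \<in> S) \<and>
    (\<forall>s\<in>S. \<exists>!t. t \<in> S \<and> s * t * s = s \<and> t * s * t = t)"

definition clifford_semigroup :: "'a::semigroup_mult set \<Rightarrow> bool"
  where "clifford_semigroup S \<longleftrightarrow> inverse_semigroup S \<and>
    (\<forall>e\<in>S. e * e = e \<longrightarrow> (\<forall>s\<in>S. e * s = s * e))"

end

theory Submission
  imports Defs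
begin

locale stl =
  fixes st :: "'a::real_normed_algebra \<Rightarrow> 'a"
  assumes invol: "\<And>x. st (st x) = x"
    and sadd: "\<And>x y. st (x + y) = st x + st y"
    and smul: "\<And>x y. st (x * y) = st y * st x"
    and cst: "\<And>x. norm (st x * x) = (norm x)\<^sup>2"
begin

lemma st0: "st 0 = 0"
  using sadd[of 0 0] by simp

lemma sminus: "st (- x) = - st x"
  using sadd[of x "-x"] st0 by (metis add.right_inverse neg_eq_iff_add_eq_0)

lemma sdiff: "st (x - y) = st x - st y"
  using sadd[of x "-y"] sminus by simp

lemma zero_if: "st x * x = 0 \<Longrightarrow> x = 0"
  using cst[of x] by simp

lemma pi_eq: assumes "partial_isometry st u" shows "u * (st u * u) = u"
proof -
  let ?q = "st u * u"
  have qq: "?q * ?q = ?q" using assms by (simp add: partial_isometry_def is_projection_def)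
  define d where "d = u - u * ?q"
  have sd: "st d = st u - ?q * st u"
    unfolding d_def sdiff smul invol by (simp add: mult.assoc)
  have "st d * d = (st u - ?q * st u) * (u - u * ?q)" using sd d_def by simp
  also have "\<dots> = ?q - ?q * ?q - ?q * ?q + ?q * ?q * ?q"
    by (simp add: algebra_simps)
  also have "\<dots> = 0" using qq by (simp add: mult.assoc)
  finally have "d = 0" using zero_if by blast
  thus ?thesis unfolding d_def by simp
qed

lemma corner_iff: assumes "is_projection st p" shows "u \<in> corner p \<longleftrightarrow> p * u * p = u"
proof
  assume "u \<in> corner p"
  then obtain x where "u = p * x * p" by (auto simp: corner_def)
  moreover have "p * p = p" using assms by (simp add: is_projection_def)
  ultimately show "p * u * p = u" by (metis mult.assoc)
next
  assume "p * u * p = u" thus "u \<in> corner p" unfolding corner_def by (metis (mono_tags, lifting) mem_Collect_eq)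
qed

lemma st_corner: assumes "is_projection st p" "u \<in> corner p" shows "st u \<in> corner p"
proof -
  have "p * u * p = u" using assms corner_iff by blast
  hence "st (p * u * p) = st u" by simp
  hence "p * st u * p = st u" using assms(1) by (simp add: smul is_projection_def mult.assoc)
  thus ?thesis using assms(1) corner_iff by blast
qed

lemma st_center: assumes "is_projection st p" "u \<in> center_of (corner p)"
  shows "st u \<in> center_of (corner p)"
proof -
  have uc: "u \<in> corner p" and com: "\<And>y. y \<in> corner p \<Longrightarrow> u * y = y * u"
    using assms(2) by (auto simp: center_of_def)
  have "st u * y = y * st u" if "y \<in> corner p" for y
  proof -
    have "st y \<in> corner p" using st_corner assms(1) that by blast
    hence "u * st y = st y * u" using com by blast
    hence "st (u * st y) = st (st y * u)" by simp
    thus ?thesis by (simp add: smul invol)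
  qed
  thus ?thesis using st_corner[OF assms(1) uc] by (auto simp: center_of_def)
qed

end

lemma cstar_stl: "cstar_algebra scC st \<Longrightarrow> stl st"
  unfolding cstar_algebra_def stl_def by blast

theorem proposition3p5:
  fixes scC :: "complex \<Rightarrow> 'a::{real_normed_algebra,banach} \<Rightarrow> 'a"
    and st :: "'a \<Rightarrow> 'a"
    and E :: "'a set"
  assumes "wstar_algebra scC st"
    and "projection_semilattice st E"
    and "(\<Union>p\<in>E. center_of (corner p) \<inter> {u. partial_isometry st u}) \<subseteq> U_of st E"
  shows "inverse_semigroup (\<Union>p\<in>E. center_of (corner p) \<inter> {u. partial_isometry st u})
    \<and> clifford_semigroup (\<Union>p\<in>E. center_of (corner p) \<inter> {u. partial_isometry st u})"
proof -
  interpret stl st using assms(1) cstar_stl by (auto simp: wstar_algebra_def)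
  define S where "S = (\<Union>p\<in>E. center_of (corner p) \<inter> {u. partial_isometry st u})"
  have projE: "\<And>p. p \<in> E \<Longrightarrow> st p = p \<and> p * p = p"
    using assms(2) by (auto simp: projection_semilattice_def is_projection_def)
  have comE: "\<And>p r. p \<in> E \<Longrightarrow> r \<in> E \<Longrightarrow> p * r = r * p \<and> p * r \<in> E"
    using assms(2) by (auto simp: projection_semilattice_def)
  have SU: "\<And>u. u \<in> S \<Longrightarrow> st u * u \<in> E \<and> u * st u \<in> E"
    using assms(3) unfolding S_def U_of_def by blast
  have basic: "\<exists>p\<in>E. p * u = u \<and> u * p = u \<and> (\<forall>y. u * (p * y * p) = p * y * p * u)
      \<and> st u * u = u * st u \<and> u * (st u * u) = u \<and> st u \<in> center_of (corner p)"
    if uS: "u \<in> S" for u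
  proof -
    obtain p where p: "p \<in> E" "u \<in> center_of (corner p)" "partial_isometry st u"
      using uS unfolding S_def by blast
    have pp: "is_projection st p" using projE p(1) by (simp add: is_projection_def)
    have uc: "u \<in> corner p" using p(2) by (simp add: center_of_def)
    have pup: "p * u * p = u" using corner_iff[OF pp] uc by blast
    have ppp: "p * p = p" using projE p(1) by simp
    have "p * u = p * (p * u * p)" using pup by simp
    also have "\<dots> = (p * p) * u * p" by (simp only: mult.assoc)
    finally have pu: "p * u = u" using ppp pup by simp
    have "u * p = (p * u * p) * p" using pup by simp
    also have "\<dots> = p * u * (p * p)" by (simp only: mult.assoc)
    finally have up: "u * p = u" using ppp pup by simp
    have com: "\<forall>y. u * (p * y * p) = p * y * p * u"
      using p(2) unfolding center_of_def corner_def by blast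
    have sc: "st u \<in> center_of (corner p)" using st_center[OF pp p(2)] .
    hence "st u * u = u * st u" using uc unfolding center_of_def by blast
    thus ?thesis using p(1) pu up com sc pi_eq[OF p(3)] by blast
  qed
  have comm: "u * q = q * u" if uS: "u \<in> S" and qE: "q \<in> E" for u q
  proof -
    obtain p where p: "p \<in> E" "p * u = u" "u * p = u" "\<forall>y. u * (p * y * p) = p * y * p * u"
      using basic[OF uS] by blast
    have qp: "q * p = p * q" using comE p(1) qE by blast
    have pp: "p * p = p" using projE p(1) by blast
    have "p * q * p = p * (q * p)" by (simp only: mult.assoc)
    also have "\<dots> = (p * p) * q" using qp by (simp only: mult.assoc)
    finally have pqp: "p * q * p = q * p" using pp qp by simp
    have "u * (p * q * p) = p * q * p * u" using p(4) by blast
    hence "u * (q * p) = q * p * u" using pqp by simp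
    hence "u * q * p = q * (p * u)" by (simp add: mult.assoc)
    moreover have "u * q * p = u * p * q" using qp by (simp add: mult.assoc)
    ultimately show ?thesis using p(2,3) by simp
  qed
  have pi_iff: "partial_isometry st w \<longleftrightarrow> (st w * w) * (st w * w) = st w * w" for w
    by (simp add: partial_isometry_def is_projection_def smul invol)
  have closed: "u * v \<in> S" if uS: "u \<in> S" and vS: "v \<in> S" for u v
  proof -
    obtain p where p: "p \<in> E" "p * u = u" "u * p = u" "\<forall>y. u * (p * y * p) = p * y * p * u"
      using basic[OF uS] by blast
    obtain r where r: "r \<in> E" "r * v = v" "v * r = v" "\<forall>y. v * (r * y * r) = r * y * r * v"
      using basic[OF vS] by blast
    have prE: "p * r \<in> E" and prc: "p * r = r * p" using comE p(1) r(1) by auto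
    have ur: "u * r = r * u" using comm uS r(1) by blast
    have vp: "v * p = p * v" using comm vS p(1) by blast
    have pp: "p * p = p" and rr: "r * r = r" using projE p(1) r(1) by auto
    have "r * (u * v) * r = (r * u) * (v * r)" by (simp only: mult.assoc)
    also have "\<dots> = (u * r) * v" using ur r(3) by simp
    also have "\<dots> = u * (r * v)" by (simp only: mult.assoc)
    finally have c1: "r * (u * v) * r = u * v" using r(2) by simp
    have "p * (u * v) * p = (p * u) * (v * p)" by (simp only: mult.assoc)
    also have "\<dots> = u * (p * v)" using vp p(2) by simp
    also have "\<dots> = (u * p) * v" by (simp only: mult.assoc)
    finally have c2: "p * (u * v) * p = u * v" using p(3) by simp
    have "p * r * (u * v) * (p * r) = p * r * (u * v) * (r * p)" using prc by simp
    also have "\<dots> = p * (r * (u * v) * r) * p" by (simp only: mult.assoc)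
    finally have "p * r * (u * v) * (p * r) = p * (r * (u * v) * r) * p" .
    hence inc: "p * r * (u * v) * (p * r) = u * v" using c1 c2 by simp
    have prp: "is_projection st (p * r)" using projE prE by (simp add: is_projection_def)
    have uvc: "u * v \<in> corner (p * r)" using corner_iff[OF prp] inc by blast
    have cen: "u * v * y = y * (u * v)" if yc: "y \<in> corner (p * r)" for y
    proof -
      obtain z where z: "y = p * r * z * (p * r)" using yc by (auto simp: corner_def)
      have "y = p * r * z * (r * p)" using z prc by simp
      also have "\<dots> = p * (r * z * r) * p" by (simp only: mult.assoc)
      finally have y1: "y = p * (r * z * r) * p" .
      have "y = (r * p) * z * (p * r)" using z prc by simp
      also have "\<dots> = r * (p * z * p) * r" by (simp only: mult.assoc)
      finally have y2: "y = r * (p * z * p) * r" .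
      have "u * y = y * u" using y1 p(4) by simp
      moreover have "v * y = y * v" using y2 r(4) by simp
      ultimately have "u * (v * y) = (y * u) * v" by (simp add: mult.assoc[symmetric])
      thus ?thesis by (simp only: mult.assoc)
    qed
    have qE: "st u * u \<in> E" and q'E: "st v * v \<in> E" using SU uS vS by auto
    have vq: "v * (st u * u) = (st u * u) * v" using comm vS qE by blast
    have "st (u * v) * (u * v) = (st u * u) * (st v * v)"
    proof -
      have "st (u * v) * (u * v) = st v * ((st u * u) * v)" by (simp add: smul mult.assoc)
      also have "\<dots> = st v * (v * (st u * u))" using vq by simp
      also have "\<dots> = (st v * v) * (st u * u)" by (simp only: mult.assoc)
      also have "\<dots> = (st u * u) * (st v * v)" using comE[OF q'E qE] by simp
      finally show ?thesis .
    qed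
    moreover have "(st u * u) * (st v * v) \<in> E" using comE qE q'E by blast
    ultimately have "partial_isometry st (u * v)" using pi_iff projE by simp
    thus ?thesis unfolding S_def using p(1) r(1) prE uvc cen
      by (auto simp: center_of_def intro!: bexI[of _ "p * r"])
  qed
  have stS: "st s \<in> S" and inv1: "s * st s * s = s" and inv2: "st s * s * st s = st s"
    if sS: "s \<in> S" for s
  proof -
    obtain p where p: "p \<in> E" "st s * s = s * st s" "s * (st s * s) = s" "st s \<in> center_of (corner p)"
      using basic[OF sS] by blast
    show "s * st s * s = s" using p(3) by (simp add: mult.assoc)
    hence "st (s * st s * s) = st s" by simp
    thus "st s * s * st s = st s" by (simp add: smul invol mult.assoc)
    have "partial_isometry st s" using sS unfolding S_def by blast
    hence "partial_isometry st (st s)" using pi_iff p(2) by (simp add: invol)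
    thus "st s \<in> S" unfolding S_def using p(1,4) by blast
  qed
  have idem: "e * x = x * e" if eS: "e \<in> S" and ee: "e * e = e" and xS: "x \<in> S" for e x
  proof -
    obtain p where p: "st e * e = e * st e" "e * (st e * e) = e"
      using basic[OF eS] by blast
    have "st e * e = st e * (e * e)" using ee by simp
    also have "\<dots> = (st e * e) * e" by (simp add: mult.assoc)
    also have "\<dots> = e * (st e * e)" using p(1) by (simp add: mult.assoc)
    also have "\<dots> = e" using p(2) .
    finally have "st e * e = e" .
    hence "e \<in> E" using SU[OF eS] by simp
    thus ?thesis using comm[OF xS] by simp
  qed
  have uniq: "t = st s" if sS: "s \<in> S" and tS: "t \<in> S" and h1: "s * t * s = s" and h2: "t * s * t = t" for s t
  proof -
    define t' where "t' = st s"
    have t'S: "t' \<in> S" and g1: "s * t' * s = s" and g2: "t' * s * t' = t'"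
      using stS inv1 inv2 sS unfolding t'_def by auto
    have "(s * t) * (s * t) = (s * t * s) * t" by (simp only: mult.assoc)
    hence i1: "(s * t) * (s * t) = s * t" using h1 by simp
    have "(t * s) * (t * s) = (t * s * t) * s" by (simp only: mult.assoc)
    hence i3: "(t * s) * (t * s) = t * s" using h2 by simp
    have st_S: "s * t \<in> S" "s * t' \<in> S" "t * s \<in> S" "t' * s \<in> S"
      using closed sS tS t'S by auto
    have c1: "(s * t) * (s * t') = (s * t') * (s * t)" by (rule idem[OF st_S(1) i1 st_S(2)])
    have c2: "(t' * s) * (t * s) = (t * s) * (t' * s)" by (rule idem[OF st_S(3) i3 st_S(4), symmetric])
    have "t = t * (s * t) " using h2 by (simp add: mult.assoc)
    also have "\<dots> = t * ((s * t') * s * t)" using g1 by simp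
    also have "\<dots> = t * ((s * t') * (s * t))" by (simp add: mult.assoc)
    also have "\<dots> = t * ((s * t) * (s * t'))" using c1 by simp
    also have "\<dots> = (t * s * t) * s * t'" by (simp add: mult.assoc)
    also have "\<dots> = t * s * t'" using h2 by simp
    finally have A: "t = t * s * t'" .
    have "t' = t' * s * t'" using g2 by simp
    also have "\<dots> = t' * (s * t * s) * t'" using h1 by simp
    also have "\<dots> = ((t' * s) * (t * s)) * t'" by (simp add: mult.assoc)
    also have "\<dots> = ((t * s) * (t' * s)) * t'" using c2 by simp
    also have "\<dots> = (t * s) * (t' * s * t')" by (simp add: mult.assoc)
    also have "\<dots> = t * s * t'" using g2 by (simp add: mult.assoc)
    finally have B: "t' = t * s * t'" .
    show ?thesis using A B unfolding t'_def by simp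
  qed
  have inv: "inverse_semigroup S"
    unfolding inverse_semigroup_def
  proof (intro conjI ballI)
    fix s t assume "s \<in> S" "t \<in> S" thus "s * t \<in> S" using closed by blast
  next
    fix s assume sS: "s \<in> S"
    show "\<exists>!t. t \<in> S \<and> s * t * s = s \<and> t * s * t = t"
      using stS[OF sS] inv1[OF sS] inv2[OF sS] uniq[OF sS] by blast
  qed
  have "clifford_semigroup S" unfolding clifford_semigroup_def using inv idem by blast
  thus ?thesis using inv unfolding S_def by blast
qed

end
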